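(* Let $\Gamma$ be a connected countable graph and let $(B_n)_{n\in\mathbb N}$ satisfy $(\dagger)$. Let $u,v\in V(\Gamma)$ be such that no maximum matching misses both $u$ and $v$, but there are maximum matchings $M_u$ and $M_v$ missing $u$ and $v$ respectively. Then $M_u\oplus M_v$ contains a path of even length with end-vertices $u$ and $v$.
   Context: Condition $(\dagger)$ on $(B_n)_{n\in\mathbb N}$: each $B_n\subseteq V(\Gamma)$ is finite, $B_n\subseteq B_{n+1}$, $\bigcup_n B_n=V(\Gamma)$, and the subgraph induced on each $B_n$ is connected. A matching $M$ misses a vertex $x$ if no edge of $M$ contains $x$. The miss sequence of $M$ is $(m_n)_{n\in\mathbb N}$ with $m_n$ the number of vertices of $B_n$ missed by $M$. For matchings $M_1,M_2$ with miss sequences $(a_n),(b_n)$, write $M_1<M_2$ if there is $N$ with $a_n=b_n$ for all $n<N$ and $a_N>b_N$. A maximum matching is a matching $M$ for which no matching $M'$ satisfies $M<M'$. $S\oplus T=(S\cup T)\setminus(S\cap T)$. *)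

theory Defs
  imports Main "HOL-Library.Countable_Set"
begin

definition graph :: "'a set \<Rightarrow> 'a set set \<Rightarrow> bool" where
  "graph V E \<longleftrightarrow> (\<forall>e\<in>E. \<exists>x y. e = {x, y} \<and> x \<noteq> y \<and> x \<in> V \<and> y \<in> V)"

definition walk_in :: "'a set set \<Rightarrow> 'a list \<Rightarrow> bool" where
  "walk_in S xs \<longleftrightarrow> xs \<noteq> [] \<and> (\<forall>i. Suc i < length xs \<longrightarrow> {xs ! i, xs ! Suc i} \<in> S)"

text \<open>A path in S: a walk with pairwise distinct vertices. Its length is the number of edges.\<close>
definition path_in :: "'a set set \<Rightarrow> 'a list \<Rightarrow> bool" where
  "path_in S xs \<longleftrightarrow> walk_in S xs \<and> distinct xs"

definition induced_connected :: "'a set set \<Rightarrow> 'a set \<Rightarrow> bool" where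
  "induced_connected E A \<longleftrightarrow>
     (\<forall>x\<in>A. \<forall>y\<in>A. \<exists>xs. walk_in {e\<in>E. e \<subseteq> A} xs \<and> hd xs = x \<and> last xs = y)"

definition connected_graph :: "'a set \<Rightarrow> 'a set set \<Rightarrow> bool" where
  "connected_graph V E \<longleftrightarrow> graph V E \<and> V \<noteq> {} \<and> induced_connected E V"

definition dagger :: "'a set \<Rightarrow> 'a set set \<Rightarrow> (nat \<Rightarrow> 'a set) \<Rightarrow> bool" where
  "dagger V E B \<longleftrightarrow> (\<forall>n. finite (B n) \<and> B n \<subseteq> V \<and> B n \<subseteq> B (Suc n) \<and> induced_connected E (B n))
                    \<and> (\<Union>n. B n) = V"

definition matching :: "'a set set \<Rightarrow> 'a set set \<Rightarrow> bool" where
  "matching E M \<longleftrightarrow> M \<subseteq> E \<and> (\<forall>e\<in>M. \<forall>f\<in>M. e \<noteq> f \<longrightarrow> e \<inter> f = {})"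

definition misses :: "'a set set \<Rightarrow> 'a \<Rightarrow> bool" where
  "misses M x \<longleftrightarrow> \<not> (\<exists>e\<in>M. x \<in> e)"

definition miss_seq :: "(nat \<Rightarrow> 'a set) \<Rightarrow> 'a set set \<Rightarrow> nat \<Rightarrow> nat" where
  "miss_seq B M n = card {x \<in> B n. misses M x}"

definition match_less :: "(nat \<Rightarrow> 'a set) \<Rightarrow> 'a set set \<Rightarrow> 'a set set \<Rightarrow> bool" where
  "match_less B M1 M2 \<longleftrightarrow>
     (\<exists>N. (\<forall>n<N. miss_seq B M1 n = miss_seq B M2 n) \<and> miss_seq B M1 N > miss_seq B M2 N)"

definition maximum_matching :: "'a set set \<Rightarrow> (nat \<Rightarrow> 'a set) \<Rightarrow> 'a set set \<Rightarrow> bool" where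
  "maximum_matching E B M \<longleftrightarrow> matching E M \<and> \<not> (\<exists>M'. matching E M' \<and> match_less B M M')"

definition sym_diff :: "'b set \<Rightarrow> 'b set \<Rightarrow> 'b set" (infixl "\<oplus>\<^sub>s" 65) where
  "S \<oplus>\<^sub>s T = (S \<union> T) - (S \<inter> T)"

end

theory Submission
  imports Defs
begin

lemma walk_single: "walk_in S [x]"
  by (simp add: walk_in_def)

lemma walk_Cons2: "walk_in S (x#y#ys) \<longleftrightarrow> {x,y} \<in> S \<and> walk_in S (y#ys)"
proof
  assume a: "walk_in S (x#y#ys)"
  then have "{x,y} \<in> S" unfolding walk_in_def by force
  moreover have "walk_in S (y#ys)" unfolding walk_in_def
  proof (intro conjI allI impI)
    fix i assume "Suc i < length (y#ys)"
    then have "Suc (Suc i) < length (x#y#ys)" by simp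
    then have "{(x#y#ys) ! Suc i, (x#y#ys) ! Suc (Suc i)} \<in> S" using a unfolding walk_in_def by blast
    then show "{(y # ys) ! i, (y # ys) ! Suc i} \<in> S" by simp
  qed simp
  ultimately show "{x,y} \<in> S \<and> walk_in S (y#ys)" by blast
next
  assume a: "{x,y} \<in> S \<and> walk_in S (y#ys)"
  show "walk_in S (x#y#ys)" unfolding walk_in_def
  proof (intro conjI allI impI)
    fix i assume i: "Suc i < length (x#y#ys)"
    show "{(x#y#ys) ! i, (x#y#ys) ! Suc i} \<in> S"
    proof (cases i)
      case 0 then show ?thesis using a by simp
    next
      case (Suc j)
      then have "Suc j < length (y#ys)" using i by simp
      then have "{(y#ys) ! j, (y#ys) ! Suc j} \<in> S" using a unfolding walk_in_def by blast
      then show ?thesis using Suc by simp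
    qed
  qed simp
qed

lemma walk_snoc:
  assumes "walk_in S xs" "{last xs, y} \<in> S"
  shows "walk_in S (xs @ [y])"
  unfolding walk_in_def
proof (intro conjI allI impI)
  fix i assume i: "Suc i < length (xs @ [y])"
  show "{(xs @ [y]) ! i, (xs @ [y]) ! Suc i} \<in> S"
  proof (cases "Suc i < length xs")
    case True
    then show ?thesis using assms(1) unfolding walk_in_def by (simp add: nth_append)
  next
    case False
    then have ii: "i = length xs - 1" "Suc i = length xs" using i by simp_all
    moreover have "xs \<noteq> []" using assms(1) unfolding walk_in_def by blast
    ultimately show ?thesis using assms(2) by (simp add: nth_append last_conv_nth)
  qed
qed simp

lemma walk_suffix:
  assumes "walk_in S (p @ q)" "q \<noteq> []"
  shows "walk_in S q"
  unfolding walk_in_def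
proof (intro conjI allI impI)
  fix i assume "Suc i < length q"
  then have "Suc (length p + i) < length (p @ q)" by simp
  then have "{(p@q) ! (length p + i), (p@q) ! Suc (length p + i)} \<in> S"
    using assms(1) unfolding walk_in_def by blast
  then show "{q ! i, q ! Suc i} \<in> S" by (simp add: nth_append)
qed (use assms in simp)

lemma walk_to_path:
  "walk_in S xs \<Longrightarrow> \<exists>ys. path_in S ys \<and> hd ys = hd xs \<and> last ys = last xs"
proof (induction xs)
  case Nil then show ?case by (simp add: walk_in_def)
next
  case (Cons x xs)
  show ?case
  proof (cases xs)
    case Nil
    then show ?thesis by (intro exI[of _ "[x]"]) (simp add: path_in_def walk_single)
  next
    case (Cons y zs)
    have e: "{x,y} \<in> S" and w: "walk_in S xs" using Cons.prems Cons walk_Cons2 by metis+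
    obtain ys where ys: "path_in S ys" "hd ys = hd xs" "last ys = last xs" using Cons.IH w by blast
    have yne: "ys \<noteq> []" using ys(1) by (simp add: path_in_def walk_in_def)
    show ?thesis
    proof (cases "x \<in> set ys")
      case True
      then obtain p q where pq: "ys = p @ x # q" by (meson split_list)
      have "path_in S (x # q)"
        using ys(1) pq walk_suffix[of S p "x#q"] by (simp add: path_in_def)
      moreover have "last (x # q) = last (x # xs)"
        using ys(3) pq Cons by (cases q) auto
      ultimately show ?thesis by (intro exI[of _ "x#q"]) simp
    next
      case False
      have ys2: "ys = y # tl ys" using yne ys(2) Cons by (cases ys) auto
      have "walk_in S (x # ys)" using e ys(1) ys2 walk_Cons2[of S x y "tl ys"]
        by (simp add: path_in_def)
      then have "path_in S (x # ys)" using False ys(1) by (simp add: path_in_def)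
      moreover have "last (x # ys) = last (x # xs)" using ys(3) yne Cons by simp
      ultimately show ?thesis by (intro exI[of _ "x#ys"]) simp
    qed
  qed
qed

lemma sym_diff_iff: "e \<in> S \<oplus>\<^sub>s T \<longleftrightarrow> (e \<in> S \<longleftrightarrow> e \<notin> T)"
  by (auto simp: sym_diff_def)

lemma sym_diff_comm: "S \<oplus>\<^sub>s T = T \<oplus>\<^sub>s S"
  by (auto simp: sym_diff_def)

lemma matching_eq: "matching E M \<Longrightarrow> e \<in> M \<Longrightarrow> f \<in> M \<Longrightarrow> e \<inter> f \<noteq> {} \<Longrightarrow> e = f"
  unfolding matching_def by blast

lemma matching_sub: "matching E M \<Longrightarrow> M \<subseteq> E"
  unfolding matching_def by blast

lemma matchingI: "M \<subseteq> E \<Longrightarrow> (\<And>e f. e \<in> M \<Longrightarrow> f \<in> M \<Longrightarrow> e \<noteq> f \<Longrightarrow> e \<inter> f = {}) \<Longrightarrow> matching E M"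
  unfolding matching_def by blast

lemma parity:
  assumes p: "path_in (Mu \<oplus>\<^sub>s Mv) xs" and mu: "matching E Mu" and mv: "matching E Mv"
    and h: "hd xs = u" "misses Mu u" and l: "last xs = v" "misses Mv v"
    and len: "length xs \<ge> 2"
  shows "even (length xs - 1)"
proof -
  let ?D = "Mu \<oplus>\<^sub>s Mv"
  let ?e = "\<lambda>i. {xs ! i, xs ! Suc i}"
  have inD: "\<And>i. Suc i < length xs \<Longrightarrow> ?e i \<in> ?D" using p by (simp add: path_in_def walk_in_def)
  have dist: "distinct xs" using p by (simp add: path_in_def)
  have cl: "\<forall>i. Suc i < length xs \<longrightarrow> (?e i \<in> Mv \<longleftrightarrow> even i)"
  proof
    fix i show "Suc i < length xs \<longrightarrow> (?e i \<in> Mv \<longleftrightarrow> even i)"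
    proof (induction i)
      case 0
      show ?case
      proof
        assume a: "Suc 0 < length xs"
        have "xs ! 0 = u" using h(1) a by (cases xs) auto
        then have "?e 0 \<notin> Mu" using h(2) unfolding misses_def by blast
        then show "?e 0 \<in> Mv \<longleftrightarrow> even (0::nat)" using inD[OF a] by (simp add: sym_diff_iff)
      qed
    next
      case (Suc i)
      show ?case
      proof
        assume a: "Suc (Suc i) < length xs"
        have i1: "?e i \<in> ?D" "?e (Suc i) \<in> ?D" using inD a by auto
        have ne: "xs ! i \<noteq> xs ! Suc (Suc i)" using dist a by (simp add: nth_eq_iff_index_eq)
        have neq: "?e i \<noteq> ?e (Suc i)" using ne by (auto simp: doubleton_eq_iff)
        have int: "?e i \<inter> ?e (Suc i) \<noteq> {}" by simp
        have a1: "Suc i < length xs" using a by simp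
        have IH: "?e i \<in> Mv \<longleftrightarrow> even i" using mp[OF Suc.IH a1] .
        show "?e (Suc i) \<in> Mv \<longleftrightarrow> even (Suc i)"
        proof (cases "?e i \<in> Mv")
          case True
          then have "?e (Suc i) \<notin> Mv" using matching_eq[OF mv True _ int] neq by blast
          then show ?thesis using True IH by simp
        next
          case False
          then have "?e i \<in> Mu" using i1 by (simp add: sym_diff_iff)
          then have "?e (Suc i) \<notin> Mu" using matching_eq[OF mu _ _ int] neq by blast
          then have "?e (Suc i) \<in> Mv" using i1 by (simp add: sym_diff_iff)
          then show ?thesis using False IH by simp
        qed
      qed
    qed
  qed
  define k where "k = length xs - 2"
  have k: "Suc k < length xs" "Suc k = length xs - 1" using len unfolding k_def by auto
  have "xs ! Suc k = v" using l(1) k len by (metis last_conv_nth list.size(3) not_numeral_le_zero)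
  then have "?e k \<notin> Mv" using l(2) unfolding misses_def by blast
  then have "odd k" using cl k by blast
  then have "even (Suc k)" by simp
  then show ?thesis unfolding k(2)[symmetric] .
qed

lemma swap:
  assumes mm: "matching E M" and mm': "matching E M'"
    and cl: "\<forall>e\<in>M \<oplus>\<^sub>s M'. e \<inter> R \<noteq> {} \<longrightarrow> e \<subseteq> R"
    and C: "C = {e \<in> M \<oplus>\<^sub>s M'. e \<inter> R \<noteq> {}}"
  shows "matching E (M \<oplus>\<^sub>s C)"
    and "\<And>x. x \<in> R \<Longrightarrow> misses (M \<oplus>\<^sub>s C) x \<longleftrightarrow> misses M' x"
    and "\<And>x. x \<notin> R \<Longrightarrow> misses (M \<oplus>\<^sub>s C) x \<longleftrightarrow> misses M x"
proof -
  let ?D = "M \<oplus>\<^sub>s M'"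
  have eq: "M \<oplus>\<^sub>s C = (M - C) \<union> (C \<inter> M')" using C by (auto simp: sym_diff_def)
  have Csub: "\<And>e. e \<in> C \<Longrightarrow> e \<subseteq> R" using C cl by blast
  show "matching E (M \<oplus>\<^sub>s C)"
  proof (rule matchingI)
    have "M \<subseteq> E" "M' \<subseteq> E" using mm mm' by (auto dest: matching_sub)
    then show "M \<oplus>\<^sub>s C \<subseteq> E" using eq by blast
  next
    fix e f assume e: "e \<in> M \<oplus>\<^sub>s C" and f: "f \<in> M \<oplus>\<^sub>s C" and ef: "e \<noteq> f"
    show "e \<inter> f = {}"
    proof (rule ccontr)
      assume "e \<inter> f \<noteq> {}"
      then obtain x where x: "x \<in> e" "x \<in> f" by blast
      consider "e \<in> M - C" "f \<in> M - C" | "e \<in> C \<inter> M'" "f \<in> C \<inter> M'"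
        | "e \<in> M - C" "f \<in> C \<inter> M'" | "e \<in> C \<inter> M'" "f \<in> M - C"
        using e f eq by blast
      then show False
      proof cases
        case 1 then show ?thesis using matching_eq[OF mm, of e f] x ef by blast
      next
        case 2 then show ?thesis using matching_eq[OF mm', of e f] x ef by blast
      next
        case 3
        have "x \<in> R" using Csub 3 x by blast
        then have "e \<notin> ?D" using 3 x C by blast
        then have "e \<in> M'" using 3 by (simp add: sym_diff_iff)
        then show ?thesis using matching_eq[OF mm', of e f] x ef 3 by blast
      next
        case 4
        have "x \<in> R" using Csub 4 x by blast
        then have "f \<notin> ?D" using 4 x C by blast
        then have "f \<in> M'" using 4 by (simp add: sym_diff_iff)
        then show ?thesis using matching_eq[OF mm', of e f] x ef 4 by blast
      qed
    qed
  qed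
  show "misses (M \<oplus>\<^sub>s C) x \<longleftrightarrow> misses M' x" if x: "x \<in> R" for x
  proof -
    have "(\<exists>e\<in>M \<oplus>\<^sub>s C. x \<in> e) \<longleftrightarrow> (\<exists>e\<in>M'. x \<in> e)"
    proof
      assume "\<exists>e\<in>M \<oplus>\<^sub>s C. x \<in> e"
      then obtain e where e: "e \<in> M \<oplus>\<^sub>s C" "x \<in> e" by blast
      show "\<exists>e\<in>M'. x \<in> e"
      proof (cases "e \<in> C")
        case True then show ?thesis using e eq by blast
      next
        case False
        then have "e \<in> M" using e eq by blast
        moreover have "e \<notin> ?D" using False x e C by blast
        ultimately show ?thesis using e by (auto simp: sym_diff_iff)
      qed
    next
      assume "\<exists>e\<in>M'. x \<in> e"
      then obtain e where e: "e \<in> M'" "x \<in> e" by blast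
      show "\<exists>e\<in>M \<oplus>\<^sub>s C. x \<in> e"
      proof (cases "e \<in> M")
        case True
        then have "e \<notin> C" using e C by (auto simp: sym_diff_iff)
        then show ?thesis using True e eq by blast
      next
        case False
        then have "e \<in> C" using e x C by (auto simp: sym_diff_iff)
        then show ?thesis using e eq by blast
      qed
    qed
    then show ?thesis unfolding misses_def by blast
  qed
  show "misses (M \<oplus>\<^sub>s C) x \<longleftrightarrow> misses M x" if x: "x \<notin> R" for x
  proof -
    have "\<And>e. x \<in> e \<Longrightarrow> e \<notin> C" using Csub x by blast
    then have "(\<exists>e\<in>M \<oplus>\<^sub>s C. x \<in> e) \<longleftrightarrow> (\<exists>e\<in>M. x \<in> e)" using eq by blast
    then show ?thesis unfolding misses_def by blast
  qed
qed

lemma max_seq_eq: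
  assumes "maximum_matching E B M1" "maximum_matching E B M2"
  shows "miss_seq B M1 = miss_seq B M2"
proof (rule ccontr)
  assume "miss_seq B M1 \<noteq> miss_seq B M2"
  then obtain n where n: "miss_seq B M1 n \<noteq> miss_seq B M2 n" by blast
  define N where "N = (LEAST n. miss_seq B M1 n \<noteq> miss_seq B M2 n)"
  have N: "miss_seq B M1 N \<noteq> miss_seq B M2 N" using n unfolding N_def by (rule LeastI)
  have lt: "\<forall>m<N. miss_seq B M1 m = miss_seq B M2 m" unfolding N_def using not_less_Least by blast
  show False
  proof (cases "miss_seq B M1 N > miss_seq B M2 N")
    case True
    then have "match_less B M1 M2" using lt unfolding match_less_def by blast
    then show False using assms unfolding maximum_matching_def by blast
  next
    case False
    then have "match_less B M2 M1" using lt N unfolding match_less_def by (metis linorder_neqE_nat)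
    then show False using assms unfolding maximum_matching_def by blast
  qed
qed

lemma card_split: "finite A \<Longrightarrow> card A = card (A - R) + card (A \<inter> R)"
proof -
  assume f: "finite A"
  have "A = (A - R) \<union> (A \<inter> R)" by blast
  then have "card A = card ((A - R) \<union> (A \<inter> R))" by simp
  also have "\<dots> = card (A - R) + card (A \<inter> R)" using f by (intro card_Un_disjoint) auto
  finally show ?thesis .
qed

lemma seq_swap:
  assumes fin: "finite (B n)"
    and m1: "\<And>x. x \<in> R \<Longrightarrow> misses M1 x \<longleftrightarrow> misses M' x"
    and m2: "\<And>x. x \<notin> R \<Longrightarrow> misses M1 x \<longleftrightarrow> misses M x"
  shows "miss_seq B M1 n = card ({x \<in> B n. misses M x} - R) + card ({x \<in> B n. misses M' x} \<inter> R)"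
proof -
  have "{x \<in> B n. misses M1 x} = ({x \<in> B n. misses M x} - R) \<union> ({x \<in> B n. misses M' x} \<inter> R)"
    using m1 m2 by blast
  then have "miss_seq B M1 n = card (({x \<in> B n. misses M x} - R) \<union> ({x \<in> B n. misses M' x} \<inter> R))"
    unfolding miss_seq_def by simp
  also have "\<dots> = card ({x \<in> B n. misses M x} - R) + card ({x \<in> B n. misses M' x} \<inter> R)"
    using fin by (intro card_Un_disjoint) auto
  finally show ?thesis .
qed

theorem lemmaA3:
  fixes V :: "'a set" and E :: "'a set set" and B :: "nat \<Rightarrow> 'a set"
    and u v :: 'a and Mu Mv :: "'a set set"
  assumes "connected_graph V E" and "countable V"
    and "dagger V E B"
    and "u \<in> V" and "v \<in> V"
    and "\<not> (\<exists>M. maximum_matching E B M \<and> misses M u \<and> misses M v)"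
    and "maximum_matching E B Mu" and "misses Mu u"
    and "maximum_matching E B Mv" and "misses Mv v"
  shows "\<exists>xs. path_in (Mu \<oplus>\<^sub>s Mv) xs \<and> hd xs = u \<and> last xs = v \<and> even (length xs - 1)"
proof -
  note nomax = assms(6)
  have mu: "matching E Mu" and mv: "matching E Mv" using assms(7,9) by (auto simp: maximum_matching_def)
  have gr: "graph V E" using assms(1) by (simp add: connected_graph_def)
  have fin: "\<And>n. finite (B n)" using assms(3) by (simp add: dagger_def)
  have uv: "u \<noteq> v" using nomax assms(7,8) by blast
  let ?D = "Mu \<oplus>\<^sub>s Mv"
  have DE: "?D \<subseteq> E" using mu mv unfolding matching_def sym_diff_def by blast
  define R where "R = {y. \<exists>xs. walk_in ?D xs \<and> hd xs = u \<and> last xs = y}"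
  have uR: "u \<in> R" unfolding R_def using walk_single by fastforce
  show ?thesis
  proof (cases "v \<in> R")
    case True
    then obtain xs where xs: "walk_in ?D xs" "hd xs = u" "last xs = v" unfolding R_def by blast
    then obtain ys where ys: "path_in ?D ys" "hd ys = u" "last ys = v" using walk_to_path by metis
    have "ys \<noteq> []" using ys(1) by (simp add: path_in_def walk_in_def)
    then have "length ys \<ge> 2" using ys uv by (cases ys; cases "tl ys") auto
    then have "even (length ys - 1)" using parity[OF ys(1) mu mv ys(2) assms(8) ys(3) assms(10)] by simp
    then show ?thesis using ys by blast
  next
    case False
    have cl: "\<forall>e\<in>?D. e \<inter> R \<noteq> {} \<longrightarrow> e \<subseteq> R"
    proof (intro ballI impI)
      fix e assume e: "e \<in> ?D" "e \<inter> R \<noteq> {}"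
      then obtain y where y: "y \<in> e" "y \<in> R" by blast
      obtain a b where ab: "e = {a,b}" using gr e DE unfolding graph_def by blast
      obtain xs where xs: "walk_in ?D xs" "hd xs = u" "last xs = y" using y R_def by blast
      have "xs \<noteq> []" using xs by (simp add: walk_in_def)
      have "z \<in> R" if z: "z \<in> e" for z
      proof (cases "z = y")
        case True then show ?thesis using y by simp
      next
        case False
        then have "e = {y, z}" using ab y z by blast
        then have "walk_in ?D (xs @ [z])" using walk_snoc[OF xs(1)] xs(3) e by simp
        moreover have "hd (xs @ [z]) = u" using xs \<open>xs \<noteq> []\<close> by simp
        ultimately show ?thesis unfolding R_def by fastforce
      qed
      then show "e \<subseteq> R" by blast
    qed
    define C where "C = {e \<in> ?D. e \<inter> R \<noteq> {}}"
    have cl': "\<forall>e\<in>Mv \<oplus>\<^sub>s Mu. e \<inter> R \<noteq> {} \<longrightarrow> e \<subseteq> R" using cl sym_diff_comm by metis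
    have C': "C = {e \<in> Mv \<oplus>\<^sub>s Mu. e \<inter> R \<noteq> {}}" using C_def sym_diff_comm by metis
    note s1 = swap[OF mu mv cl C_def]
    note s2 = swap[OF mv mu cl' C']
    define M1 where "M1 = Mu \<oplus>\<^sub>s C"
    define M2 where "M2 = Mv \<oplus>\<^sub>s C"
    define X where "X n = card ({x \<in> B n. misses Mu x} - R)" for n
    define Y where "Y n = card ({x \<in> B n. misses Mv x} - R)" for n
    define \<alpha> where "\<alpha> n = card ({x \<in> B n. misses Mu x} \<inter> R)" for n
    define \<beta> where "\<beta> n = card ({x \<in> B n. misses Mv x} \<inter> R)" for n
    have a: "miss_seq B Mu n = X n + \<alpha> n" for n
      unfolding miss_seq_def X_def \<alpha>_def using fin by (intro card_split) simp
    have b: "miss_seq B Mv n = Y n + \<beta> n" for n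
      unfolding miss_seq_def Y_def \<beta>_def using fin by (intro card_split) simp
    have ab: "miss_seq B Mu n = miss_seq B Mv n" for n using max_seq_eq[OF assms(7,9)] by simp
    have m1: "miss_seq B M1 n = X n + \<beta> n" for n
      unfolding M1_def X_def \<beta>_def using seq_swap[OF fin s1(2) s1(3)] by simp
    have m2: "miss_seq B M2 n = Y n + \<alpha> n" for n
      unfolding M2_def Y_def \<alpha>_def using seq_swap[OF fin s2(2) s2(3)] by simp
    have eqab: "\<alpha> = \<beta>"
    proof (rule ccontr)
      assume "\<alpha> \<noteq> \<beta>"
      then obtain n where n: "\<alpha> n \<noteq> \<beta> n" by blast
      define N where "N = (LEAST n. \<alpha> n \<noteq> \<beta> n)"
      have N: "\<alpha> N \<noteq> \<beta> N" using n unfolding N_def by (rule LeastI)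
      have lt: "\<forall>m<N. \<alpha> m = \<beta> m" unfolding N_def using not_less_Least by blast
      show False
      proof (cases "\<alpha> N > \<beta> N")
        case True
        have "match_less B Mu M1" unfolding match_less_def
          using lt True a m1 by (intro exI[of _ N]) auto
        then show False using assms(7) s1(1) unfolding maximum_matching_def M1_def by blast
      next
        case False
        then have "\<beta> N > \<alpha> N" using N by simp
        have "match_less B Mv M2" unfolding match_less_def
          using lt \<open>\<beta> N > \<alpha> N\<close> b m2 by (intro exI[of _ N]) auto
        then show False using assms(9) s2(1) unfolding maximum_matching_def M2_def by blast
      qed
    qed
    have seq2: "miss_seq B M2 = miss_seq B Mv" using m2 b eqab by auto
    have "maximum_matching E B M2"
      using assms(9) s2(1) seq2 unfolding maximum_matching_def match_less_def M2_def by simp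
    moreover have "misses M2 u" using s2(2)[OF uR] assms(8) M2_def by simp
    moreover have "misses M2 v" using s2(3)[OF False] assms(10) M2_def by simp
    ultimately show ?thesis using nomax by blast
  qed
qed

end
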